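(* Let $G=B(H)$ for some connected graph $H$ with at least one edge. Then $KB_e(G)$ is a cycle, a path, or contains an induced $(n,m)$-necklace with $n\ge 6$ and $m\ge 1$ whose cycle has good neighbours in $KB_e(G)$.
   Context: All graphs are finite, simple and undirected. A biclique of a graph $X$ is a maximal (with respect to inclusion) induced subgraph of $X$ that is a complete bipartite graph $K_{p,q}$ with $p,q\ge 1$; $KB_e(X)$ has one vertex per biclique of $X$, two distinct vertices adjacent iff the bicliques share an edge. The burgeon graph $B(H)$ is obtained by replacing each vertex $v$ of $H$ by a clique $C_v$ on $d(v)$ vertices, whose vertices are in bijection with the neighbours of $v$; for each edge $uv$ of $H$, the vertex of $C_v$ corresponding to $u$ is joined to the vertex of $C_u$ corresponding to $v$; there are no other edges between different cliques. For $n\ge3$, $m\ge1$, the $(n,m)$-necklace is the graph on $n+m$ vertices consisting of an induced cycle $C_n$ and a complete graph $K_m$ such that, for one fixed edge $xy$ of the cycle, every vertex of the $K_m$ is adjacent to $x$ and $y$ and to no other vertex of the cycle. An induced cycle $C=v_0\ldots v_{n-1}$ ($n\ge5$) of a graph $X$ has good neighbours in $X$ if for every vertex $v\in V(X)\setminus V(C)$ and every $i$ (indices mod $n$), $\{v_{i-1},v_{i+1}\}\subseteq N(v)$ implies $v_i\in N(v)$. *)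

theory Defs
  imports Main
begin

definition graph :: "'a set \<Rightarrow> ('a \<Rightarrow> 'a \<Rightarrow> bool) \<Rightarrow> bool" where
  "graph V E \<longleftrightarrow> finite V \<and> (\<forall>x y. E x y \<longrightarrow> x \<in> V \<and> y \<in> V)
     \<and> (\<forall>x y. E x y \<longrightarrow> E y x) \<and> (\<forall>x. \<not> E x x)"

definition connected_graph :: "'a set \<Rightarrow> ('a \<Rightarrow> 'a \<Rightarrow> bool) \<Rightarrow> bool" where
  "connected_graph V E \<longleftrightarrow> (\<forall>u\<in>V. \<forall>v\<in>V. E\<^sup>*\<^sup>* u v)"

definition has_edge :: "('a \<Rightarrow> 'a \<Rightarrow> bool) \<Rightarrow> bool" where
  "has_edge E \<longleftrightarrow> (\<exists>x y. E x y)"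

definition induces_complete_bipartite :: "('a \<Rightarrow> 'a \<Rightarrow> bool) \<Rightarrow> 'a set \<Rightarrow> bool" where
  "induces_complete_bipartite E S \<longleftrightarrow>
     (\<exists>A B. A \<noteq> {} \<and> B \<noteq> {} \<and> A \<inter> B = {} \<and> S = A \<union> B
        \<and> (\<forall>x\<in>A. \<forall>y\<in>A. \<not> E x y) \<and> (\<forall>x\<in>B. \<forall>y\<in>B. \<not> E x y)
        \<and> (\<forall>x\<in>A. \<forall>y\<in>B. E x y))"

definition biclique :: "'a set \<Rightarrow> ('a \<Rightarrow> 'a \<Rightarrow> bool) \<Rightarrow> 'a set \<Rightarrow> bool" where
  "biclique V E S \<longleftrightarrow> S \<subseteq> V \<and> induces_complete_bipartite E S
     \<and> (\<forall>T. S \<subseteq> T \<and> T \<subseteq> V \<and> induces_complete_bipartite E T \<longrightarrow> T = S)"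

definition KBe_V :: "'a set \<Rightarrow> ('a \<Rightarrow> 'a \<Rightarrow> bool) \<Rightarrow> 'a set set" where
  "KBe_V V E = {S. biclique V E S}"

definition KBe_E :: "'a set \<Rightarrow> ('a \<Rightarrow> 'a \<Rightarrow> bool) \<Rightarrow> 'a set \<Rightarrow> 'a set \<Rightarrow> bool" where
  "KBe_E V E S T \<longleftrightarrow> S \<noteq> T \<and> biclique V E S \<and> biclique V E T
     \<and> (\<exists>x\<in>S \<inter> T. \<exists>y\<in>S \<inter> T. E x y)"

text \<open>Burgeon graph B(H): the vertex (v,u) is the vertex of the clique C_v
corresponding to the neighbour u of v.\<close>
definition burgeon_V :: "'a set \<Rightarrow> ('a \<Rightarrow> 'a \<Rightarrow> bool) \<Rightarrow> ('a \<times> 'a) set" where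
  "burgeon_V V E = {(v, u). v \<in> V \<and> E v u}"

definition burgeon_E :: "('a \<Rightarrow> 'a \<Rightarrow> bool) \<Rightarrow> ('a \<times> 'a) \<Rightarrow> ('a \<times> 'a) \<Rightarrow> bool" where
  "burgeon_E E p q \<longleftrightarrow> E (fst p) (snd p) \<and> E (fst q) (snd q)
     \<and> ((fst p = fst q \<and> snd p \<noteq> snd q) \<or> (fst p = snd q \<and> snd p = fst q))"

definition is_path_graph :: "'a set \<Rightarrow> ('a \<Rightarrow> 'a \<Rightarrow> bool) \<Rightarrow> bool" where
  "is_path_graph V E \<longleftrightarrow> (\<exists>vs. vs \<noteq> [] \<and> distinct vs \<and> set vs = V
     \<and> (\<forall>x y. E x y \<longleftrightarrow> (\<exists>i. Suc i < length vs \<and>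
            ((x = vs ! i \<and> y = vs ! Suc i) \<or> (y = vs ! i \<and> x = vs ! Suc i)))))"

definition is_cycle_graph :: "'a set \<Rightarrow> ('a \<Rightarrow> 'a \<Rightarrow> bool) \<Rightarrow> bool" where
  "is_cycle_graph V E \<longleftrightarrow> (\<exists>vs. length vs \<ge> 3 \<and> distinct vs \<and> set vs = V
     \<and> (\<forall>x y. E x y \<longleftrightarrow> (\<exists>i<length vs.
            (x = vs ! i \<and> y = vs ! (Suc i mod length vs))
          \<or> (y = vs ! i \<and> x = vs ! (Suc i mod length vs)))))"

definition induced_cycle :: "'a set \<Rightarrow> ('a \<Rightarrow> 'a \<Rightarrow> bool) \<Rightarrow> 'a list \<Rightarrow> bool" where
  "induced_cycle V E cs \<longleftrightarrow> length cs \<ge> 3 \<and> distinct cs \<and> set cs \<subseteq> V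
     \<and> (\<forall>i<length cs. \<forall>j<length cs. E (cs ! i) (cs ! j) \<longleftrightarrow>
           (j = Suc i mod length cs \<or> i = Suc j mod length cs))"

definition good_neighbours :: "'a set \<Rightarrow> ('a \<Rightarrow> 'a \<Rightarrow> bool) \<Rightarrow> 'a list \<Rightarrow> bool" where
  "good_neighbours V E cs \<longleftrightarrow> (let n = length cs in
     (\<forall>v \<in> V - set cs. \<forall>i<n.
        E v (cs ! ((i + n - 1) mod n)) \<and> E v (cs ! (Suc i mod n)) \<longrightarrow> E v (cs ! i)))"

text \<open>cs together with K induces an (n,m)-necklace with n = length cs, m = card K,
whose cycle is cs and whose fixed cycle edge is cs!j cs!(j+1 mod n).\<close>
definition induced_necklace :: "'a set \<Rightarrow> ('a \<Rightarrow> 'a \<Rightarrow> bool) \<Rightarrow> 'a list \<Rightarrow> 'a set \<Rightarrow> bool" where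
  "induced_necklace V E cs K \<longleftrightarrow> induced_cycle V E cs \<and> finite K \<and> K \<noteq> {}
     \<and> K \<subseteq> V \<and> K \<inter> set cs = {}
     \<and> (\<forall>x\<in>K. \<forall>y\<in>K. x \<noteq> y \<longrightarrow> E x y)
     \<and> (\<exists>j<length cs. \<forall>x\<in>K. \<forall>i<length cs.
          E x (cs ! i) \<longleftrightarrow> (i = j \<or> i = Suc j mod length cs))"

end

theory Submission
  imports Defs
begin


definition tri :: "'a \<Rightarrow> 'a \<Rightarrow> 'a \<Rightarrow> ('a \<times> 'a) set" where
  "tri v u w = {(v,u),(v,w),(u,v)}"

locale HG =
  fixes VH :: "'a set" and E :: "'a \<Rightarrow> 'a \<Rightarrow> bool"
  assumes gr: "graph VH E"
begin

abbreviation "VG \<equiv> burgeon_V VH E"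
abbreviation "EG \<equiv> burgeon_E E"

lemma sym: "E x y \<Longrightarrow> E y x" using gr by (auto simp: graph_def)
lemma irr: "\<not> E x x" using gr by (auto simp: graph_def)
lemma inV: "E x y \<Longrightarrow> x \<in> VH" using gr by (auto simp: graph_def)

definition valid :: "'a \<Rightarrow> 'a \<Rightarrow> 'a \<Rightarrow> bool" where
  "valid v u w \<longleftrightarrow> E v u \<and> E v w \<and> u \<noteq> w"

lemma EG_iff: "EG (a,b) (c,d) \<longleftrightarrow> E a b \<and> E c d \<and> ((a=c \<and> b\<noteq>d) \<or> (a=d \<and> b=c))"
  by (simp add: burgeon_E_def)

lemma VG_iff: "(a,b) \<in> VG \<longleftrightarrow> E a b" using inV by (auto simp: burgeon_V_def)

lemma EG_VG: "EG x y \<Longrightarrow> x \<in> VG \<and> y \<in> VG"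
  by (cases x; cases y) (auto simp: EG_iff VG_iff)

lemma EG_irr: "\<not> EG x x" by (cases x) (auto simp: EG_iff irr)
lemma EG_sym: "EG x y \<Longrightarrow> EG y x" by (cases x; cases y) (auto simp: EG_iff sym)

lemma nbr: "EG (v,u) y \<Longrightarrow> (\<exists>z. y = (v,z) \<and> z \<noteq> u \<and> E v z) \<or> y = (u,v)"
  by (cases y) (auto simp: EG_iff)

lemma noC4:
  assumes "EG x y" "EG x y'" "EG x' y" "EG x' y'" "x \<noteq> x'" "y \<noteq> y'" "\<not> EG y y'"
  shows False
proof -
  obtain v u where x: "x = (v,u)" by (cases x)
  have vu: "v \<noteq> u" using assms(1) x irr by (cases y) (auto simp: EG_iff)
  from nbr[of v u y] nbr[of v u y'] assms(1,2) x
  consider z where "y = (v,z)" "y' = (u,v)" "z \<noteq> u" "E v z" | z where "y' = (v,z)" "y = (u,v)" "z \<noteq> u" "E v z"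
    | z z' where "y = (v,z)" "y' = (v,z')" "z \<noteq> u" "z' \<noteq> u"  "E v z" "E v z'" | "y = (u,v)" "y' = (u,v)"
    by blast
  then show False
  proof cases
    case 1
    obtain p q where x': "x' = (p,q)" by (cases x')
    show ?thesis using assms(3,4,5) 1 x x' vu by (auto simp: EG_iff)
  next
    case 2
    obtain p q where x': "x' = (p,q)" by (cases x')
    show ?thesis using assms(3,4,5) 2 x x' vu by (auto simp: EG_iff)
  next
    case 3 then show ?thesis using assms(6,7) by (auto simp: EG_iff)
  next
    case 4 then show ?thesis using assms(6) by auto
  qed
qed

definition star :: "('a\<times>'a) set \<Rightarrow> ('a\<times>'a) \<Rightarrow> bool" where
  "star T x \<longleftrightarrow> x \<in> T \<and> (\<exists>y\<in>T. y \<noteq> x) \<and> (\<forall>y\<in>T-{x}. EG x y) \<and> (\<forall>y\<in>T-{x}. \<forall>z\<in>T-{x}. \<not> EG y z)"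

lemma icb_star:
  assumes "induces_complete_bipartite EG T"
  shows "\<exists>x. star T x"
proof -
  obtain A B where AB: "A \<noteq> {}" "B \<noteq> {}" "A \<inter> B = {}" "T = A \<union> B"
     "\<forall>x\<in>A. \<forall>y\<in>A. \<not> EG x y" "\<forall>x\<in>B. \<forall>y\<in>B. \<not> EG x y" "\<forall>x\<in>A. \<forall>y\<in>B. EG x y"
    using assms unfolding induces_complete_bipartite_def by blast
  obtain a b where ab: "a \<in> A" "b \<in> B" using AB by blast
  show ?thesis
  proof (cases "A = {a}")
    case True
    have "star T a" unfolding star_def using AB ab True by (auto simp: EG_sym)
    then show ?thesis ..
  next
    case False
    then obtain a' where a': "a' \<in> A" "a' \<noteq> a" using ab by blast
    show ?thesis
    proof (cases "B = {b}")
      case True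
      have "star T b" unfolding star_def using AB ab True by (auto simp: EG_sym)
      then show ?thesis ..
    next
      case False
      then obtain b' where b': "b' \<in> B" "b' \<noteq> b" using ab by blast
      have False using noC4[of a b b' a'] AB ab a' b' by (metis EG_sym)
      then show ?thesis ..
    qed
  qed
qed

lemma tri_icb: assumes "valid v u w" shows "induces_complete_bipartite EG (tri v u w)" "tri v u w \<subseteq> VG"
proof -
  have vu: "v \<noteq> u" using assms irr unfolding valid_def by auto
  show "induces_complete_bipartite EG (tri v u w)"
    unfolding induces_complete_bipartite_def
    apply (rule exI[of _ "{(v,u)}"], rule exI[of _ "{(v,w),(u,v)}"])
    using assms vu unfolding valid_def tri_def by (auto simp: EG_iff sym irr)
  show "tri v u w \<subseteq> VG" using assms unfolding valid_def tri_def by (auto simp: VG_iff sym)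
qed

lemma tri_bic: assumes "valid v u w" shows "biclique VG EG (tri v u w)"
proof -
  have vu: "v \<noteq> u" and vw: "v \<noteq> w" and uw: "u \<noteq> w" and E1: "E v u" and E2: "E v w"
    using assms irr unfolding valid_def by auto
  have "T = tri v u w" if T: "tri v u w \<subseteq> T" "T \<subseteq> VG" "induces_complete_bipartite EG T" for T
  proof -
    obtain x where x: "star T x" using icb_star T(3) by blast
    have e1: "EG (v,u) (v,w)" "EG (v,u) (u,v)" using E1 E2 uw by (auto simp: EG_iff sym)
    have in3: "(v,u) \<in> T" "(v,w) \<in> T" "(u,v) \<in> T" using T(1) unfolding tri_def by auto
    have xc: "x = (v,u)"
    proof (rule ccontr)
      assume nx: "x \<noteq> (v,u)"
      show False
      proof (cases "x = (v,w)")
        case True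
        then show False using x in3 e1 nx vu unfolding star_def by auto
      next
        case False
        then show False using x in3 e1 nx vu unfolding star_def by auto
      qed
    qed
    have "y \<in> tri v u w" if y: "y \<in> T" for y
    proof (cases "y = x")
      case True then show ?thesis by (simp add: xc tri_def)
    next
      case False
      then have "EG (v,u) y" using x y xc unfolding star_def by auto
      then consider z where "y = (v,z)" "z \<noteq> u" "E v z" | "y = (u,v)" using nbr by blast
      then show ?thesis
      proof cases
        case 1
        show ?thesis
        proof (cases "z = w")
          case True then show ?thesis using 1 by (simp add: tri_def)
        next
          case False
          have "EG (v,z) (v,w)" using 1 False E2 by (auto simp: EG_iff)
          moreover have "(v,w) \<in> T - {x}" "y \<in> T - {x}" using in3 xc uw y \<open>y \<noteq> x\<close> by auto
          ultimately show ?thesis using x 1 unfolding star_def by auto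
        qed
      next
        case 2 then show ?thesis by (simp add: tri_def)
      qed
    qed
    then show ?thesis using T(1) by auto
  qed
  then show ?thesis unfolding biclique_def using tri_icb[OF assms] by blast
qed

end

context HG begin

definition noK2 :: bool where
  "noK2 \<longleftrightarrow> (\<forall>v u. E v u \<longrightarrow> (\<exists>w. w \<noteq> u \<and> E v w) \<or> (\<exists>w. w \<noteq> v \<and> E u w))"

lemma bic_tri:
  assumes nk: noK2 and S: "biclique VG EG S"
  shows "\<exists>v u w. valid v u w \<and> S = tri v u w"
proof -
  have SV: "S \<subseteq> VG" and max: "\<And>T. S \<subseteq> T \<Longrightarrow> T \<subseteq> VG \<Longrightarrow> induces_complete_bipartite EG T \<Longrightarrow> T = S"
    using S unfolding biclique_def by auto
  have icbS: "induces_complete_bipartite EG S" using S unfolding biclique_def by simp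
  obtain x where x: "star S x" using icb_star[OF icbS] by blast
  obtain v u where xvu: "x = (v,u)" by (cases x)
  have "x \<in> VG" using x SV unfolding star_def by auto
  then have Evu: "E v u" using xvu VG_iff by simp
  have nb: "\<And>y. y \<in> S \<Longrightarrow> y \<noteq> x \<Longrightarrow> EG (v,u) y" using x xvu unfolding star_def by auto
  show ?thesis
  proof (cases "\<exists>z. (v,z) \<in> S \<and> z \<noteq> u")
    case True
    then obtain z where z: "(v,z) \<in> S" "z \<noteq> u" by blast
    have Evz: "E v z" using z SV VG_iff by auto
    have val: "valid v u z" using Evu Evz z unfolding valid_def by auto
    have "S \<subseteq> tri v u z"
    proof
      fix y assume y: "y \<in> S"
      show "y \<in> tri v u z"
      proof (cases "y = x")
        case True then show ?thesis by (simp add: xvu tri_def)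
      next
        case False
        then have "EG (v,u) y" using nb y by auto
        then consider z' where "y = (v,z')" "z' \<noteq> u" "E v z'" | "y = (u,v)" using nbr by blast
        then show ?thesis
        proof cases
          case 1
          show ?thesis
          proof (cases "z' = z")
            case True then show ?thesis using 1 by (simp add: tri_def)
          next
            case False
            have "EG (v,z') (v,z)" using 1 False Evz by (auto simp: EG_iff)
            moreover have "(v,z) \<in> S - {x}" "y \<in> S - {x}" using z xvu y \<open>y \<noteq> x\<close> by auto
            ultimately show ?thesis using x 1 unfolding star_def by auto
          qed
        next
          case 2 then show ?thesis by (simp add: tri_def)
        qed
      qed
    qed
    then have "tri v u z = S" using max tri_icb[OF val] by blast
    then show ?thesis using val by metis
  next
    case False
    have Ssub: "S \<subseteq> {(v,u),(u,v)}"
    proof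
      fix y assume y: "y \<in> S"
      show "y \<in> {(v,u),(u,v)}"
      proof (cases "y = x")
        case True then show ?thesis by (simp add: xvu)
      next
        case False
        then have "EG (v,u) y" using nb y by auto
        then show ?thesis using nbr \<open>\<not> (\<exists>z. (v,z) \<in> S \<and> z \<noteq> u)\<close> y by blast
      qed
    qed
    from nk Evu consider w where "w \<noteq> u" "E v w" | w where "w \<noteq> v" "E u w" unfolding noK2_def by blast
    then show ?thesis
    proof cases
      case 1
      have val: "valid v u w" using 1 Evu unfolding valid_def by auto
      have "S \<subseteq> tri v u w" using Ssub by (auto simp: tri_def)
      then have "tri v u w = S" using max tri_icb[OF val] by blast
      then show ?thesis using val by metis
    next
      case 2
      have val: "valid u v w" using 2 Evu sym unfolding valid_def by auto
      have "S \<subseteq> tri u v w" using Ssub by (auto simp: tri_def)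
      then have "tri u v w = S" using max tri_icb[OF val] by blast
      then show ?thesis using val by metis
    qed
  qed
qed

lemma KBV_iff: assumes nk: noK2 shows "S \<in> KBe_V VG EG \<longleftrightarrow> (\<exists>v u w. valid v u w \<and> S = tri v u w)"
proof
  assume "S \<in> KBe_V VG EG" then show "\<exists>v u w. valid v u w \<and> S = tri v u w"
    using bic_tri[OF nk] unfolding KBe_V_def by blast
next
  assume "\<exists>v u w. valid v u w \<and> S = tri v u w"
  then obtain v u w where "valid v u w" "S = tri v u w" by blast
  then show "S \<in> KBe_V VG EG"
    using tri_bic unfolding KBe_V_def by blast
qed

lemma tri_mem: "(a,b) \<in> tri p q r \<longleftrightarrow> (a=p \<and> b=q) \<or> (a=p \<and> b=r) \<or> (a=q \<and> b=p)"
  by (auto simp: tri_def)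

lemma tri_inj:
  assumes "valid v u w" "valid v' u' w'"
  shows "tri v u w = tri v' u' w' \<longleftrightarrow> (v=v' \<and> u=u' \<and> w=w')"
proof -
  have a: "v \<noteq> u" "v \<noteq> w" "u \<noteq> w" "v' \<noteq> u'" "v' \<noteq> w'" "u' \<noteq> w'"
    using assms irr unfolding valid_def by auto
  show ?thesis
  proof
    assume eq: "tri v u w = tri v' u' w'"
    have "(v,u) \<in> tri v u w" "(v,w) \<in> tri v u w" "(u,v) \<in> tri v u w" by (simp_all add: tri_def)
    then have m: "(v,u) \<in> tri v' u' w'" "(v,w) \<in> tri v' u' w'" "(u,v) \<in> tri v' u' w'"
      unfolding eq .
    from m(1) consider "v=v'" "u=u'" | "v=v'" "u=w'" | "v=u'" "u=v'" unfolding tri_mem by blast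
    then show "v=v' \<and> u=u' \<and> w=w'"
    proof cases
      case 1
      then show ?thesis using m(2) a unfolding tri_mem by blast
    next
      case 2
      then show ?thesis using m(2,3) a unfolding tri_mem by blast
    next
      case 3
      then show ?thesis using m(2) a unfolding tri_mem by blast
    qed
  qed simp
qed

lemma tri_edge:
  assumes "valid p q r" "x \<in> tri p q r" "y \<in> tri p q r" "EG x y"
  shows "(x = (p,q) \<and> y = (p,r)) \<or> (x = (p,r) \<and> y = (p,q)) \<or> (x = (p,q) \<and> y = (q,p)) \<or> (x = (q,p) \<and> y = (p,q))"
proof -
  have "p \<noteq> q" "q \<noteq> r" using assms(1) irr unfolding valid_def by auto
  obtain a b c d where xy: "x = (a,b)" "y = (c,d)" by (cases x, cases y)
  show ?thesis using assms(2-4) \<open>p \<noteq> q\<close> \<open>q \<noteq> r\<close> unfolding xy tri_mem EG_iff using irr by auto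
qed

lemma adj:
  assumes "valid v u w" "valid v' u' w'"
  shows "KBe_E VG EG (tri v u w) (tri v' u' w') \<longleftrightarrow>
    ((v,u,w) \<noteq> (v',u',w') \<and> ((v'=v \<and> u'=u) \<or> (v'=v \<and> u'=w \<and> w'=u) \<or> (v'=u \<and> u'=v)))"
proof -
  have a: "v \<noteq> u" "v \<noteq> w" "u \<noteq> w" "v' \<noteq> u'" "v' \<noteq> w'" "u' \<noteq> w'"
    using assms irr unfolding valid_def by auto
  have E: "E v u" "E v w" "E v' u'" "E v' w'" "E u v" "E u' v'" using assms sym unfolding valid_def by auto
  have b: "biclique VG EG (tri v u w)" "biclique VG EG (tri v' u' w')" using tri_bic assms by auto
  have sh: "(\<exists>x\<in>tri v u w \<inter> tri v' u' w'. \<exists>y\<in>tri v u w \<inter> tri v' u' w'. EG x y) \<longleftrightarrow>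
        ((v'=v \<and> u'=u) \<or> (v'=v \<and> u'=w \<and> w'=u) \<or> (v'=u \<and> u'=v))"
  proof
    assume "\<exists>x\<in>tri v u w \<inter> tri v' u' w'. \<exists>y\<in>tri v u w \<inter> tri v' u' w'. EG x y"
    then obtain x y where xy: "x \<in> tri v u w" "y \<in> tri v u w" "x \<in> tri v' u' w'" "y \<in> tri v' u' w'" "EG x y" by blast
    have e1: "(x = (v,u) \<and> y = (v,w)) \<or> (x = (v,w) \<and> y = (v,u)) \<or> (x = (v,u) \<and> y = (u,v)) \<or> (x = (u,v) \<and> y = (v,u))"
      using tri_edge[OF assms(1) xy(1,2,5)] .
    have e2: "(x = (v',u') \<and> y = (v',w')) \<or> (x = (v',w') \<and> y = (v',u')) \<or> (x = (v',u') \<and> y = (u',v')) \<or> (x = (u',v') \<and> y = (v',u'))"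
      using tri_edge[OF assms(2) xy(3,4,5)] .
    show "(v'=v \<and> u'=u) \<or> (v'=v \<and> u'=w \<and> w'=u) \<or> (v'=u \<and> u'=v)"
      using e1 e2 a by auto
  next
    assume "(v'=v \<and> u'=u) \<or> (v'=v \<and> u'=w \<and> w'=u) \<or> (v'=u \<and> u'=v)"
    then show "\<exists>x\<in>tri v u w \<inter> tri v' u' w'. \<exists>y\<in>tri v u w \<inter> tri v' u' w'. EG x y"
    proof (elim disjE)
      assume h: "v'=v \<and> u'=u"
      have "EG (v,u) (u,v)" using E a by (simp add: EG_iff)
      moreover have "(v,u) \<in> tri v u w \<inter> tri v' u' w'" "(u,v) \<in> tri v u w \<inter> tri v' u' w'" using h by (simp_all add: tri_mem)
      ultimately show ?thesis by blast
    next
      assume h: "v'=v \<and> u'=w \<and> w'=u"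
      have "EG (v,u) (v,w)" using E a by (simp add: EG_iff)
      moreover have "(v,u) \<in> tri v u w \<inter> tri v' u' w'" "(v,w) \<in> tri v u w \<inter> tri v' u' w'" using h by (simp_all add: tri_mem)
      ultimately show ?thesis by blast
    next
      assume h: "v'=u \<and> u'=v"
      have "EG (v,u) (u,v)" using E a by (simp add: EG_iff)
      moreover have "(v,u) \<in> tri v u w \<inter> tri v' u' w'" "(u,v) \<in> tri v u w \<inter> tri v' u' w'" using h by (simp_all add: tri_mem)
      ultimately show ?thesis by blast
    qed
  qed
  have "KBe_E VG EG (tri v u w) (tri v' u' w') \<longleftrightarrow> tri v u w \<noteq> tri v' u' w' \<and>
      (\<exists>x\<in>tri v u w \<inter> tri v' u' w'. \<exists>y\<in>tri v u w \<inter> tri v' u' w'. EG x y)"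
    unfolding KBe_E_def using b by simp
  also have "\<dots> \<longleftrightarrow> ((v,u,w) \<noteq> (v',u',w') \<and> ((v'=v \<and> u'=u) \<or> (v'=v \<and> u'=w \<and> w'=u) \<or> (v'=u \<and> u'=v)))"
    unfolding sh tri_inj[OF assms] by simp
  finally show ?thesis .
qed

end


lemma all6: "(\<forall>i<(6::nat). P i) \<longleftrightarrow> (P 0 \<and> P 1 \<and> P 2 \<and> P 3 \<and> P 4 \<and> P 5)"
proof -
  have "{..<(6::nat)} = {0,1,2,3,4,5}" by auto
  then show ?thesis by (metis lessThan_iff insert_iff empty_iff)
qed

context HG begin

definition cs6 :: "'a \<Rightarrow> 'a \<Rightarrow> 'a \<Rightarrow> 'a \<Rightarrow> ('a\<times>'a) set list" where
  "cs6 b a c d = [tri b a c, tri b a d, tri b d a, tri b d c, tri b c d, tri b c a]"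

lemma cyc6:
  assumes nk: noK2 and E: "E b a" "E b c" "E b d" and dd: "a \<noteq> c" "a \<noteq> d" "c \<noteq> d"
  shows "induced_cycle (KBe_V VG EG) (KBe_E VG EG) (cs6 b a c d)"
    and "good_neighbours (KBe_V VG EG) (KBe_E VG EG) (cs6 b a c d)"
proof -
  have ba: "b \<noteq> a" "b \<noteq> c" "b \<noteq> d" using E irr by auto
  have v: "valid b a c" "valid b a d" "valid b d a" "valid b d c" "valid b c d" "valid b c a"
    using E dd unfolding valid_def by auto
  note adjv = adj[OF v(1)] adj[OF v(2)] adj[OF v(3)] adj[OF v(4)] adj[OF v(5)] adj[OF v(6)]
  have len: "length (cs6 b a c d) = 6" by (simp add: cs6_def)
  note injv = tri_inj[OF v(1)] tri_inj[OF v(2)] tri_inj[OF v(3)] tri_inj[OF v(4)] tri_inj[OF v(5)] tri_inj[OF v(6)]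
  show "induced_cycle (KBe_V VG EG) (KBe_E VG EG) (cs6 b a c d)"
    unfolding induced_cycle_def
  proof (intro conjI)
    show "3 \<le> length (cs6 b a c d)" by (simp add: cs6_def)
    show "distinct (cs6 b a c d)" using v dd ba by (simp add: cs6_def injv)
    show "set (cs6 b a c d) \<subseteq> KBe_V VG EG" using v by (auto simp: cs6_def KBV_iff[OF nk])
    show "\<forall>i<length (cs6 b a c d). \<forall>j<length (cs6 b a c d). KBe_E VG EG (cs6 b a c d ! i) (cs6 b a c d ! j) =
        (j = Suc i mod length (cs6 b a c d) \<or> i = Suc j mod length (cs6 b a c d))"
      unfolding len all6 using v dd ba by (simp add: cs6_def adjv)
  qed
  show "good_neighbours (KBe_V VG EG) (KBe_E VG EG) (cs6 b a c d)"
    unfolding good_neighbours_def Let_def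
  proof (intro ballI)
    fix X assume X: "X \<in> KBe_V VG EG - set (cs6 b a c d)"
    then obtain p q r where vX: "valid p q r" "X = tri p q r" using KBV_iff[OF nk] by blast
    have nX: "(p,q,r) \<notin> {(b,a,c),(b,a,d),(b,d,a),(b,d,c),(b,c,d),(b,c,a)}"
      using X vX v by (auto simp: cs6_def tri_inj)
    note adjX = adj[OF vX(1)]
    have pq: "p \<noteq> q" "q \<noteq> r" "p \<noteq> r" using vX(1) irr unfolding valid_def by auto
    show "\<forall>i<length (cs6 b a c d).
            KBe_E VG EG X (cs6 b a c d ! ((i + length (cs6 b a c d) - 1) mod length (cs6 b a c d))) \<and>
            KBe_E VG EG X (cs6 b a c d ! (Suc i mod length (cs6 b a c d))) \<longrightarrow>
            KBe_E VG EG X (cs6 b a c d ! i)"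
      unfolding len all6 using v dd ba nX pq unfolding vX(2) by (intro conjI; simp add: cs6_def adjX; auto)
  qed
qed

end

context HG begin

lemma neck_gen:
  assumes nk: noK2 and E: "E b a" "E b c" "E b d" and dd: "a \<noteq> c" "a \<noteq> d" "c \<noteq> d"
    and vk: "valid p q r" and nin: "(p,q,r) \<notin> {(b,a,c),(b,a,d),(b,d,a),(b,d,c),(b,c,d),(b,c,a)}"
    and ad: "\<forall>i<6. KBe_E VG EG (tri p q r) (cs6 b a c d ! i) \<longleftrightarrow> (i = 0 \<or> i = 1)"
  shows "\<exists>cs K. length cs \<ge> 6 \<and> induced_necklace (KBe_V VG EG) (KBe_E VG EG) cs K
              \<and> good_neighbours (KBe_V VG EG) (KBe_E VG EG) cs"
proof -
  have v: "valid b a c" "valid b a d" "valid b d a" "valid b d c" "valid b c d" "valid b c a"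
    using E dd unfolding valid_def by auto
  have len: "length (cs6 b a c d) = 6" by (simp add: cs6_def)
  have "induced_necklace (KBe_V VG EG) (KBe_E VG EG) (cs6 b a c d) {tri p q r}"
    unfolding induced_necklace_def
  proof (intro conjI)
    show "induced_cycle (KBe_V VG EG) (KBe_E VG EG) (cs6 b a c d)" using cyc6 assms by blast
    show "{tri p q r} \<subseteq> KBe_V VG EG" using vk KBV_iff[OF nk] by blast
    show "{tri p q r} \<inter> set (cs6 b a c d) = {}"
      using nin vk v by (auto simp: cs6_def tri_inj)
    show "\<exists>j<length (cs6 b a c d). \<forall>x\<in>{tri p q r}. \<forall>i<length (cs6 b a c d).
       KBe_E VG EG x (cs6 b a c d ! i) = (i = j \<or> i = Suc j mod length (cs6 b a c d))"
      unfolding len using ad by (intro exI[of _ 0]) simp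
  qed auto
  then show ?thesis using cyc6(2)[OF assms(1-7)] len by (intro exI[of _ "cs6 b a c d"] exI[of _ "{tri p q r}"]) simp
qed

lemma neck1:
  assumes nk: noK2 and E: "E b a" "E b c" "E b d" "E b e" and dd: "a \<noteq> c" "a \<noteq> d" "c \<noteq> d"
    "e \<noteq> a" "e \<noteq> c" "e \<noteq> d"
  shows "\<exists>cs K. length cs \<ge> 6 \<and> induced_necklace (KBe_V VG EG) (KBe_E VG EG) cs K
              \<and> good_neighbours (KBe_V VG EG) (KBe_E VG EG) cs"
proof (rule neck_gen[OF nk E(1-3) dd(1-3), of b a e])
  have ba: "b \<noteq> a" "b \<noteq> c" "b \<noteq> d" "b \<noteq> e" using E irr by auto
  have v: "valid b a c" "valid b a d" "valid b d a" "valid b d c" "valid b c d" "valid b c a"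
    using E dd unfolding valid_def by auto
  show vk: "valid b a e" using E dd unfolding valid_def by auto
  show "(b, a, e) \<notin> {(b, a, c), (b, a, d), (b, d, a), (b, d, c), (b, c, d), (b, c, a)}" using dd by auto
  show "\<forall>i<6. KBe_E VG EG (tri b a e) (cs6 b a c d ! i) = (i = 0 \<or> i = 1)"
    unfolding all6 using v dd ba by (simp add: cs6_def adj[OF vk])
qed

lemma neck2:
  assumes nk: noK2 and E: "E b a" "E b c" "E b d" "E a x" and dd: "a \<noteq> c" "a \<noteq> d" "c \<noteq> d"
    "x \<noteq> b"
  shows "\<exists>cs K. length cs \<ge> 6 \<and> induced_necklace (KBe_V VG EG) (KBe_E VG EG) cs K
              \<and> good_neighbours (KBe_V VG EG) (KBe_E VG EG) cs"
proof (rule neck_gen[OF nk E(1-3) dd(1-3), of a b x])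
  have ba: "b \<noteq> a" "b \<noteq> c" "b \<noteq> d" "a \<noteq> x" using E irr by auto
  have v: "valid b a c" "valid b a d" "valid b d a" "valid b d c" "valid b c d" "valid b c a"
    using E dd unfolding valid_def by auto
  show vk: "valid a b x" using E dd sym unfolding valid_def by auto
  show "(a, b, x) \<notin> {(b, a, c), (b, a, d), (b, d, a), (b, d, c), (b, c, d), (b, c, a)}" using ba by auto
  show "\<forall>i<6. KBe_E VG EG (tri a b x) (cs6 b a c d ! i) = (i = 0 \<or> i = 1)"
    unfolding all6 using v dd ba by (simp add: cs6_def adj[OF vk])
qed

end


lemma path_or_cycle:
  fixes V :: "'b set" and R :: "'b \<Rightarrow> 'b \<Rightarrow> bool"
  assumes fin: "finite V" and symR: "\<And>x y. R x y \<Longrightarrow> R y x" and irrR: "\<And>x. \<not> R x x"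
    and inR: "\<And>x y. R x y \<Longrightarrow> x \<in> V" and ne: "V \<noteq> {}"
    and conn: "\<And>u v. u \<in> V \<Longrightarrow> v \<in> V \<Longrightarrow> R\<^sup>*\<^sup>* u v"
    and deg: "\<And>x a b c. R x a \<Longrightarrow> R x b \<Longrightarrow> R x c \<Longrightarrow> a = b \<or> a = c \<or> b = c"
  shows "is_cycle_graph V R \<or> is_path_graph V R"
proof -
  define W where "W vs \<longleftrightarrow> vs \<noteq> [] \<and> distinct vs \<and> set vs \<subseteq> V \<and> (\<forall>i. Suc i < length vs \<longrightarrow> R (vs!i) (vs!Suc i))" for vs
  obtain x0 where x0: "x0 \<in> V" using ne by blast
  have W0: "W [x0]" using x0 unfolding W_def by auto
  have bnd: "\<forall>ws. W ws \<longrightarrow> length ws < Suc (card V)"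
  proof (intro allI impI)
    fix ws assume "W ws"
    then have "card (set ws) \<le> card V" "card (set ws) = length ws"
      using card_mono[OF fin] distinct_card unfolding W_def by auto
    then show "length ws < Suc (card V)" by simp
  qed
  obtain vs where Wvs: "W vs" and mx: "\<And>ws. W ws \<Longrightarrow> length ws \<le> length vs"
    using ex_has_greatest_nat[of W "[x0]" length, OF W0 bnd] by blast
  define n where "n = length vs"
  have vsne: "vs \<noteq> []" and dist: "distinct vs" and sV: "set vs \<subseteq> V"
    and cons: "\<And>i. Suc i < n \<Longrightarrow> R (vs!i) (vs!Suc i)" using Wvs unfolding W_def n_def by auto
  have n1: "n \<ge> 1" using vsne n_def by (cases vs) auto
  have inj: "\<And>i j. i < n \<Longrightarrow> j < n \<Longrightarrow> vs!i = vs!j \<longleftrightarrow> i = j"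
    using dist n_def nth_eq_iff_index_eq by blast
  have endR: "y \<in> set vs" if "R (vs!(n-1)) y" for y
  proof (rule ccontr)
    assume ny: "y \<notin> set vs"
    have yV: "y \<in> V" using inR symR that by blast
    have "W (vs @ [y])" unfolding W_def
    proof (intro conjI allI impI)
      show "distinct (vs @ [y])" using dist ny by simp
      show "set (vs @ [y]) \<subseteq> V" using sV yV by simp
      fix i assume i: "Suc i < length (vs @ [y])"
      show "R ((vs @ [y]) ! i) ((vs @ [y]) ! Suc i)"
      proof (cases "Suc i < n")
        case True then show ?thesis using cons[OF True] by (simp add: nth_append n_def)
      next
        case False
        then have "i = n - 1" using i n_def by simp
        then show ?thesis using that n1 by (simp add: nth_append n_def)
      qed
    qed simp
    then show False using mx by fastforce
  qed
  have startR: "y \<in> set vs" if "R (vs!0) y" for y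
  proof (rule ccontr)
    assume ny: "y \<notin> set vs"
    have yV: "y \<in> V" using inR symR that by blast
    have "W (y # vs)" unfolding W_def
    proof (intro conjI allI impI)
      show "distinct (y # vs)" using dist ny by simp
      show "set (y # vs) \<subseteq> V" using sV yV by simp
      fix i assume i: "Suc i < length (y # vs)"
      show "R ((y # vs) ! i) ((y # vs) ! Suc i)"
      proof (cases i)
        case 0 then show ?thesis using symR[OF that] by simp
      next
        case (Suc k) then show ?thesis using cons[of k] i n_def by simp
      qed
    qed simp
    then show False using mx by fastforce
  qed
  have internal: "y = vs!(i-1) \<or> y = vs!Suc i" if "0 < i" "Suc i < n" "R (vs!i) y" for i y
  proof -
    have "R (vs!(i-1)) (vs!i)" using cons[of "i-1"] that by simp
    then have a: "R (vs!i) (vs!(i-1))" by (rule symR)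
    have b: "R (vs!i) (vs!Suc i)" using cons that by simp
    have "vs!(i-1) \<noteq> vs!Suc i" using inj[of "i-1" "Suc i"] that by simp
    then show ?thesis using deg[OF a b that(3)] by blast
  qed
  have closed: "y \<in> set vs" if xin: "x \<in> set vs" and "R x y" for x y
  proof -
    obtain i where i: "i < n" "x = vs!i" using xin by (auto simp: in_set_conv_nth n_def)
    consider "i = 0" | "i = n - 1" | "0 < i" "Suc i < n" using i by linarith
    then show ?thesis
    proof cases
      case 1 then show ?thesis using startR that i by simp
    next
      case 2 then show ?thesis using endR that i by simp
    next
      case 3
      have "y = vs!(i-1) \<or> y = vs!Suc i" using internal[OF 3] that i by auto
      moreover have "vs!(i-1) \<in> set vs" "vs!Suc i \<in> set vs" using 3 n_def by auto
      ultimately show ?thesis by auto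
    qed
  qed
  have Vset: "set vs = V"
  proof
    show "set vs \<subseteq> V" by (rule sV)
    have v0: "vs!0 \<in> set vs" using vsne by simp
    show "V \<subseteq> set vs"
    proof
      fix v assume "v \<in> V"
      then have "R\<^sup>*\<^sup>* (vs!0) v" using conn sV v0 by blast
      then show "v \<in> set vs"
        by (induction rule: rtranclp_induct) (use v0 closed in auto)
    qed
  qed
  have chord: "j = Suc i \<or> (i = 0 \<and> j = n - 1)" if ij: "i < j" "j < n" "R (vs!i) (vs!j)" for i j
  proof (cases "0 < i")
    case True
    have si: "Suc i < n" using ij by simp
    have "vs!j = vs!(i-1) \<or> vs!j = vs!Suc i" using internal[OF True si ij(3)] .
    then show ?thesis
    proof
      assume "vs!j = vs!(i-1)"
      then have "j = i - 1" using inj[of j "i-1"] ij by simp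
      then show ?thesis using ij by simp
    next
      assume "vs!j = vs!Suc i"
      then have "j = Suc i" using inj[of j "Suc i"] ij si by simp
      then show ?thesis by simp
    qed
  next
    case False
    then have i0: "i = 0" by simp
    show ?thesis
    proof (cases "j = n - 1")
      case True then show ?thesis using i0 by simp
    next
      case False
      then have j0: "0 < j" and sj: "Suc j < n" using ij i0 by auto
      have "vs!i = vs!(j-1) \<or> vs!i = vs!Suc j" using internal[OF j0 sj symR[OF ij(3)]] .
      then show ?thesis
      proof
        assume "vs!i = vs!(j-1)"
        then have "i = j - 1" using inj[of i "j-1"] ij by simp
        then show ?thesis using i0 j0 by simp
      next
        assume "vs!i = vs!Suc j"
        then have "i = Suc j" using inj[of i "Suc j"] ij sj by simp
        then show ?thesis using i0 by simp
      qed
    qed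
  qed
  have edge_cases: "(\<exists>i. Suc i < n \<and> ((x = vs!i \<and> y = vs!Suc i) \<or> (y = vs!i \<and> x = vs!Suc i)))
      \<or> (x = vs!0 \<and> y = vs!(n-1)) \<or> (y = vs!0 \<and> x = vs!(n-1))" if "R x y" for x y
  proof -
    have "x \<in> V" "y \<in> V" using inR symR that by blast+
    then obtain i j where ij: "i < n" "j < n" "x = vs!i" "y = vs!j" using Vset by (auto simp: in_set_conv_nth n_def)
    have "i \<noteq> j" using irrR that ij by auto
    then consider "i < j" | "j < i" by linarith
    then show ?thesis
    proof cases
      case 1
      then have "j = Suc i \<or> (i = 0 \<and> j = n - 1)" using chord ij that by blast
      then show ?thesis using ij by auto
    next
      case 2
      then have "i = Suc j \<or> (j = 0 \<and> i = n - 1)" using chord ij symR[OF that] by blast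
      then show ?thesis using ij by auto
    qed
  qed
  show ?thesis
  proof (cases "n \<ge> 3 \<and> R (vs!0) (vs!(n-1))")
    case True
    have "Suc (length vs - 1) = length vs" using vsne by (cases vs) auto
    then have m0: "Suc (length vs - 1) mod length vs = 0" by simp
    have "is_cycle_graph V R" unfolding is_cycle_graph_def
    proof (intro exI[of _ vs] conjI allI)
      show "3 \<le> length vs" using True n_def by simp
      show "distinct vs" by (rule dist)
      show "set vs = V" by (rule Vset)
      fix x y
      show "R x y \<longleftrightarrow> (\<exists>i<length vs. x = vs ! i \<and> y = vs ! (Suc i mod length vs) \<or> y = vs ! i \<and> x = vs ! (Suc i mod length vs))"
      proof
        assume "R x y"
        from edge_cases[OF this] consider i where "Suc i < n" "x = vs!i \<and> y = vs!Suc i \<or> y = vs!i \<and> x = vs!Suc i"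
          | "x = vs!0" "y = vs!(n-1)" | "y = vs!0" "x = vs!(n-1)" by blast
        then show "\<exists>i<length vs. x = vs ! i \<and> y = vs ! (Suc i mod length vs) \<or> y = vs ! i \<and> x = vs ! (Suc i mod length vs)"
        proof cases
          case (1 i)
          then show ?thesis by (intro exI[of _ i]) (auto simp: n_def)
        next
          case 2
          then show ?thesis using n1 m0 by (intro exI[of _ "n-1"]) (auto simp: n_def)
        next
          case 3
          then show ?thesis using n1 m0 by (intro exI[of _ "n-1"]) (auto simp: n_def)
        qed
      next
        assume "\<exists>i<length vs. x = vs ! i \<and> y = vs ! (Suc i mod length vs) \<or> y = vs ! i \<and> x = vs ! (Suc i mod length vs)"
        then obtain i where i: "i < n" "x = vs ! i \<and> y = vs ! (Suc i mod n) \<or> y = vs ! i \<and> x = vs ! (Suc i mod n)"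
          unfolding n_def by blast
        have "R (vs!i) (vs!(Suc i mod n))"
        proof (cases "Suc i < n")
          case True then show ?thesis using cons by simp
        next
          case False
          then have sn: "Suc i = n" using i by auto
          then have "i = n - 1" "Suc i mod n = 0" by auto
          then show ?thesis using True symR by auto
        qed
        then show "R x y" using i symR by auto
      qed
    qed
    then show ?thesis ..
  next
    case False
    have "is_path_graph V R" unfolding is_path_graph_def
    proof (intro exI[of _ vs] conjI allI)
      show "vs \<noteq> []" by (rule vsne)
      show "distinct vs" by (rule dist)
      show "set vs = V" by (rule Vset)
      fix x y
      show "R x y \<longleftrightarrow> (\<exists>i. Suc i < length vs \<and> (x = vs ! i \<and> y = vs ! Suc i \<or> y = vs ! i \<and> x = vs ! Suc i))"
      proof
        assume r: "R x y"
        from edge_cases[OF this] consider i where "Suc i < n" "x = vs!i \<and> y = vs!Suc i \<or> y = vs!i \<and> x = vs!Suc i"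
          | "x = vs!0" "y = vs!(n-1)" | "y = vs!0" "x = vs!(n-1)" by blast
        then show "\<exists>i. Suc i < length vs \<and> (x = vs ! i \<and> y = vs ! Suc i \<or> y = vs ! i \<and> x = vs ! Suc i)"
        proof cases
          case (1 i)
          then show ?thesis by (intro exI[of _ i]) (auto simp: n_def)
        next
          case 2 note a = this
          then have "n \<noteq> 1" using r irrR by auto
          then have "n = 2" using False a r n1 by auto
          then show ?thesis using a by (intro exI[of _ 0]) (auto simp: n_def)
        next
          case 3 note a = this
          then have "n \<noteq> 1" using r irrR by auto
          then have "n = 2" using False a r n1 symR by auto
          then show ?thesis using a by (intro exI[of _ 0]) (auto simp: n_def)
        qed
      next
        assume "\<exists>i. Suc i < length vs \<and> (x = vs ! i \<and> y = vs ! Suc i \<or> y = vs ! i \<and> x = vs ! Suc i)"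
        then show "R x y" using cons symR n_def by auto
      qed
    qed
    then show ?thesis ..
  qed
qed


context HG begin

abbreviation "KV \<equiv> KBe_V VG EG"
abbreviation "KE \<equiv> KBe_E VG EG"

lemma KE_sym: "KE S T \<Longrightarrow> KE T S"
  unfolding KBe_E_def using EG_sym by (auto simp: Int_commute)

lemma KE_irr: "\<not> KE S S" unfolding KBe_E_def by simp

lemma KE_in: "KE S T \<Longrightarrow> S \<in> KV" unfolding KBe_E_def KBe_V_def by simp

lemma finH: "finite VH" using gr unfolding graph_def by simp

lemma KV_fin: "finite KV"
proof -
  have "VG \<subseteq> VH \<times> VH" unfolding burgeon_V_def using inV sym by auto
  then have "finite VG" using finH by (meson finite_SigmaI finite_subset)
  moreover have "KV \<subseteq> Pow VG" unfolding KBe_V_def biclique_def by auto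
  ultimately show ?thesis by (meson finite_Pow_iff finite_subset)
qed

lemma same_center: assumes "valid v y w" "valid v y w'" shows "KE\<^sup>*\<^sup>* (tri v y w) (tri v y w')"
proof (cases "w = w'")
  case True then show ?thesis by simp
next
  case False
  then have "KE (tri v y w) (tri v y w')" using adj[OF assms] by simp
  then show ?thesis by simp
qed

lemma swap_adj: assumes "valid v y w" shows "KE (tri v y w) (tri v w y)"
proof -
  have "valid v w y" using assms unfolding valid_def by auto
  then show ?thesis using adj[OF assms] assms unfolding valid_def by auto
qed

lemma cross_adj: assumes "valid v u w" "valid u v x" shows "KE (tri v u w) (tri u v x)"
  using adj[OF assms] assms irr unfolding valid_def by auto

lemma within: assumes "valid v y w" "valid v y' w'" shows "KE\<^sup>*\<^sup>* (tri v y w) (tri v y' w')"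
proof (cases "y' = y")
  case True then show ?thesis using same_center assms by simp
next
  case False
  have v1: "valid v y y'" using assms False unfolding valid_def by auto
  have v2: "valid v y' y" using assms False unfolding valid_def by auto
  have "KE\<^sup>*\<^sup>* (tri v y w) (tri v y y')" using same_center[OF assms(1) v1] .
  also have "KE\<^sup>*\<^sup>* (tri v y y') (tri v y' y)" using swap_adj[OF v1] by simp
  also have "KE\<^sup>*\<^sup>* (tri v y' y) (tri v y' w')" using same_center[OF v2 assms(2)] .
  finally show ?thesis .
qed

definition notA :: bool where
  "notA \<longleftrightarrow> (\<forall>b a c d. E b a \<and> E b c \<and> E b d \<and> a \<noteq> c \<and> a \<noteq> d \<and> c \<noteq> d \<longrightarrow>
      (\<forall>e. E b e \<longrightarrow> e = a \<or> e = c \<or> e = d) \<and> (\<forall>x. E a x \<longrightarrow> x = b))"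

lemma two:
  assumes nA: notA and v0: "valid v u w" and v1: "valid p q r" and v2: "valid p' q' r'"
    and a1: "KE (tri v u w) (tri p q r)" and a2: "KE (tri v u w) (tri p' q' r')"
    and n1: "(p,q,r) \<noteq> (v,w,u)" and n2: "(p',q',r') \<noteq> (v,w,u)"
  shows "(p,q,r) = (p',q',r')"
proof -
  have t1: "(p=v \<and> q=u \<and> r\<noteq>w) \<or> (p=u \<and> q=v)" using adj[OF v0 v1] a1 n1 by auto
  have t2: "(p'=v \<and> q'=u \<and> r'\<noteq>w) \<or> (p'=u \<and> q'=v)" using adj[OF v0 v2] a2 n2 by auto
  have E0: "E v u" "E v w" "u \<noteq> w" "E u v" using v0 sym unfolding valid_def by auto
  have nA': "\<And>b a c d e x. E b a \<Longrightarrow> E b c \<Longrightarrow> E b d \<Longrightarrow> a \<noteq> c \<Longrightarrow> a \<noteq> d \<Longrightarrow> c \<noteq> d \<Longrightarrow>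
      (E b e \<longrightarrow> e = a \<or> e = c \<or> e = d) \<and> (E a x \<longrightarrow> x = b)"
    using nA unfolding notA_def by blast
  show ?thesis
  proof (rule ccontr)
    assume ne: "(p,q,r) \<noteq> (p',q',r')"
    from t1 t2 show False
    proof (elim disjE conjE)
      assume h: "p = v" "q = u" "r \<noteq> w" "p' = v" "q' = u" "r' \<noteq> w"
      then have "r \<noteq> r'" "r \<noteq> u" "r' \<noteq> u" "E v r" "E v r'" using ne v1 v2 unfolding valid_def by auto
      then show False using nA'[of v u w r r' u] E0 h by auto
    next
      assume h: "p = v" "q = u" "r \<noteq> w" "p' = u" "q' = v"
      then have "r \<noteq> u" "E v r" "E u r'" "r' \<noteq> v" using v1 v2 unfolding valid_def by auto
      then show False using nA'[of v u w r u r'] E0 h by auto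
    next
      assume h: "p = u" "q = v" "p' = v" "q' = u" "r' \<noteq> w"
      then have "r' \<noteq> u" "E v r'" "E u r" "r \<noteq> v" using v1 v2 unfolding valid_def by auto
      then show False using nA'[of v u w r' u r] E0 h by auto
    next
      assume h: "p = u" "q = v" "p' = u" "q' = v"
      then have "r \<noteq> r'" "r \<noteq> v" "r' \<noteq> v" "E u r" "E u r'" using ne v1 v2 unfolding valid_def by auto
      then show False using nA'[of u v r r' u w] E0 h by auto
    qed
  qed
qed

lemma KE_deg:
  assumes nk: noK2 and nA: notA and a: "KE X A" "KE X B" "KE X C"
  shows "A = B \<or> A = C \<or> B = C"
proof -
  obtain v u w where vX: "valid v u w" "X = tri v u w" using KBV_iff[OF nk, THEN iffD1, OF KE_in[OF a(1)]] by blast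
  have inA: "A \<in> KV" "B \<in> KV" "C \<in> KV" using KE_in[OF KE_sym[OF a(1)]] KE_in[OF KE_sym[OF a(2)]] KE_in[OF KE_sym[OF a(3)]] by auto
  obtain p q r where vA: "valid p q r" "A = tri p q r" using KBV_iff[OF nk, THEN iffD1, OF inA(1)] by blast
  obtain p1 q1 r1 where vB: "valid p1 q1 r1" "B = tri p1 q1 r1" using KBV_iff[OF nk, THEN iffD1, OF inA(2)] by blast
  obtain p2 q2 r2 where vC: "valid p2 q2 r2" "C = tri p2 q2 r2" using KBV_iff[OF nk, THEN iffD1, OF inA(3)] by blast
  have a': "KE (tri v u w) (tri p q r)" "KE (tri v u w) (tri p1 q1 r1)" "KE (tri v u w) (tri p2 q2 r2)"
    using a unfolding vX(2) vA(2) vB(2) vC(2) .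
  note tw = two[OF nA vX(1)]
  define t where "t = (v,w,u)"
  have "(p,q,r) = (p1,q1,r1) \<or> (p,q,r) = (p2,q2,r2) \<or> (p1,q1,r1) = (p2,q2,r2)"
  proof (cases "(p,q,r) = t")
    case True
    show ?thesis
    proof (cases "(p1,q1,r1) = t")
      case True2: True
      then show ?thesis using True by simp
    next
      case False2: False
      show ?thesis
      proof (cases "(p2,q2,r2) = t")
        case True3: True
        then show ?thesis using True by simp
      next
        case False3: False
        show ?thesis using tw[OF vB(1) vC(1) a'(2,3)] False2 False3 unfolding t_def by blast
      qed
    qed
  next
    case False
    show ?thesis
    proof (cases "(p1,q1,r1) = t")
      case True2: True
      show ?thesis
      proof (cases "(p2,q2,r2) = t")
        case True3: True
        then show ?thesis using True2 by simp
      next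
        case False3: False
        show ?thesis using tw[OF vA(1) vC(1) a'(1,3)] False False3 unfolding t_def by blast
      qed
    next
      case False2: False
      show ?thesis using tw[OF vA(1) vB(1) a'(1,2)] False False2 unfolding t_def by blast
    qed
  qed
  then show ?thesis unfolding vA(2) vB(2) vC(2) by auto
qed

lemma KE_conn:
  assumes nk: noK2 and cg: "connected_graph VH E" and b: "E b p" "E b q" "p \<noteq> q"
    and S: "S \<in> KV" and T: "T \<in> KV"
  shows "KE\<^sup>*\<^sup>* S T"
proof -
  define T0 where "T0 = tri b p q"
  have vT0: "valid b p q" using b unfolding valid_def by auto
  define P where "P z \<longleftrightarrow> (\<forall>y w. valid z y w \<longrightarrow> KE\<^sup>*\<^sup>* T0 (tri z y w))" for z
  define Q where "Q z \<longleftrightarrow> P z \<and> (\<forall>y. E z y \<longrightarrow> P y)" for z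
  have Pfrom: "P z" if "valid z y w" "KE\<^sup>*\<^sup>* T0 (tri z y w)" for z y w
    unfolding P_def using that within by (meson rtranclp_trans)
  have Pb: "P b" using Pfrom[OF vT0] unfolding T0_def by simp
  have Pstep: "P y" if Pz: "P z" and zy: "E z y" and w: "E z w" "w \<noteq> y" for z y w
  proof (cases "\<exists>x. E y x \<and> x \<noteq> z")
    case True
    then obtain x where x: "E y x" "x \<noteq> z" by blast
    have v1: "valid z y w" using zy w unfolding valid_def by auto
    have v2: "valid y z x" using zy x sym unfolding valid_def by auto
    have "KE\<^sup>*\<^sup>* T0 (tri y z x)" using Pz v1 cross_adj[OF v1 v2] unfolding P_def
      by (meson rtranclp.rtrancl_into_rtrancl)
    then show ?thesis using Pfrom[OF v2] by simp
  next
    case False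
    then show ?thesis unfolding P_def valid_def by auto
  qed
  have Qb: "Q b"
    unfolding Q_def
  proof (intro conjI allI impI)
    show "P b" by (rule Pb)
    fix y assume "E b y"
    show "P y"
    proof (cases "y = p")
      case True then show ?thesis using Pstep[OF Pb \<open>E b y\<close> b(2)] b by simp
    next
      case False then show ?thesis using Pstep[OF Pb \<open>E b y\<close> b(1)] by simp
    qed
  qed
  have Qall: "Q z" if "E\<^sup>*\<^sup>* b z" for z
    using that
  proof (induction rule: rtranclp_induct)
    case base then show ?case by (rule Qb)
  next
    case (step z z')
    have Pz': "P z'" using step Q_def by blast
    show ?case
      unfolding Q_def
    proof (intro conjI allI impI)
      show "P z'" by (rule Pz')
      fix y assume y: "E z' y"
      show "P y"
      proof (cases "y = z")
        case True then show ?thesis using step Q_def by blast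
      next
        case False
        then show ?thesis using Pstep[OF Pz' y, of z] step sym by blast
      qed
    qed
  qed
  have toT0: "KE\<^sup>*\<^sup>* T0 X" if XK: "X \<in> KV" for X
  proof -
    obtain v u w where vX: "valid v u w" "X = tri v u w" using KBV_iff[OF nk, THEN iffD1, OF XK] by blast
    have "v \<in> VH" "b \<in> VH" using vX b inV unfolding valid_def by auto
    then have "E\<^sup>*\<^sup>* b v" using cg unfolding connected_graph_def by blast
    then have "P v" using Qall Q_def by blast
    then show ?thesis using vX P_def by blast
  qed
  have symc: "KE\<^sup>*\<^sup>* Y X" if "KE\<^sup>*\<^sup>* X Y" for X Y
    using that
  proof (induction rule: rtranclp_induct)
    case base then show ?case by simp
  next
    case (step y z)
    then show ?case using KE_sym by (meson converse_rtranclp_into_rtranclp)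
  qed
  show ?thesis using toT0[OF S] toT0[OF T] symc by (meson rtranclp_trans)
qed

end

context HG begin

lemma K2case:
  assumes cg: "connected_graph VH E" and xy: "E x y" and no2: "\<not> (\<exists>b p q. E b p \<and> E b q \<and> p \<noteq> q)"
  shows "is_path_graph KV KE"
proof -
  have yx: "E y x" using sym xy .
  have nbx: "\<And>z. E x z \<Longrightarrow> z = y" using no2 xy by blast
  have nby: "\<And>z. E y z \<Longrightarrow> z = x" using no2 yx by blast
  have reach: "a \<in> {x,y}" if "E\<^sup>*\<^sup>* x a" for a
    using that
  proof (induction rule: rtranclp_induct)
    case base then show ?case by simp
  next
    case (step a a')
    then show ?case using nbx nby by auto
  qed
  have VGeq: "VG = {(x,y),(y,x)}"
  proof
    show "VG \<subseteq> {(x,y),(y,x)}"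
    proof
      fix z assume z: "z \<in> VG"
      obtain a b where zab: "z = (a,b)" by (cases z)
      have Eab: "E a b" using z zab VG_iff by simp
      have "a \<in> VH" "x \<in> VH" using Eab xy inV by auto
      then have "E\<^sup>*\<^sup>* x a" using cg unfolding connected_graph_def by blast
      then have "a \<in> {x,y}" by (rule reach)
      then show "z \<in> {(x,y),(y,x)}" using Eab nbx nby zab by auto
    qed
    show "{(x,y),(y,x)} \<subseteq> VG" using xy yx VG_iff by auto
  qed
  have xny: "x \<noteq> y" using xy irr by auto
  have icb: "induces_complete_bipartite EG VG"
    unfolding induces_complete_bipartite_def VGeq
    by (rule exI[of _ "{(x,y)}"], rule exI[of _ "{(y,x)}"]) (use xny xy yx EG_irr in \<open>auto simp: EG_iff\<close>)
  have bVG: "biclique VG EG VG" unfolding biclique_def using icb by auto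
  have uniq: "S = VG" if S: "biclique VG EG S" for S
  proof -
    have SV: "S \<subseteq> VG" using S unfolding biclique_def by simp
    have "induces_complete_bipartite EG S" using S unfolding biclique_def by simp
    then obtain A B where AB: "A \<noteq> {}" "B \<noteq> {}" "A \<inter> B = {}" "S = A \<union> B"
      unfolding induces_complete_bipartite_def by blast
    obtain a b where ab: "a \<in> A" "b \<in> B" using AB by blast
    have "a \<noteq> b" using ab AB(3) by blast
    moreover have "a \<in> VG" "b \<in> VG" using ab AB(4) SV by auto
    ultimately have "VG \<subseteq> {a,b}" unfolding VGeq by auto
    then have "VG \<subseteq> S" using ab AB(4) by auto
    then show ?thesis using SV by auto
  qed
  have KVeq: "KV = {VG}" unfolding KBe_V_def using uniq bVG by auto
  show ?thesis unfolding is_path_graph_def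
  proof (intro exI[of _ "[VG]"] conjI allI)
    fix S T
    show "KE S T \<longleftrightarrow> (\<exists>i. Suc i < length [VG] \<and> (S = [VG] ! i \<and> T = [VG] ! Suc i \<or> T = [VG] ! i \<and> S = [VG] ! Suc i))"
    proof
      assume st: "KE S T"
      then have "S \<in> KV" "T \<in> KV" using KE_in KE_sym by blast+
      then have "S = T" using KVeq by auto
      then show "\<exists>i. Suc i < length [VG] \<and> (S = [VG] ! i \<and> T = [VG] ! Suc i \<or> T = [VG] ! i \<and> S = [VG] ! Suc i)"
        using st KE_irr by blast
    qed simp
  qed (use KVeq in auto)
qed

lemma noK2_from:
  assumes cg: "connected_graph VH E" and b: "E b p" "E b q" "p \<noteq> q"
  shows noK2
  unfolding noK2_def
proof (intro allI impI)
  fix v u assume vu: "E v u"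
  show "(\<exists>w. w \<noteq> u \<and> E v w) \<or> (\<exists>w. w \<noteq> v \<and> E u w)"
  proof (rule ccontr)
    assume "\<not> ?thesis"
    then have nv: "\<And>w. E v w \<Longrightarrow> w = u" and nu: "\<And>w. E u w \<Longrightarrow> w = v" by auto
    have reach: "a \<in> {v,u}" if "E\<^sup>*\<^sup>* v a" for a
      using that
    proof (induction rule: rtranclp_induct)
      case base then show ?case by simp
    next
      case (step a a')
      then show ?case using nv nu by auto
    qed
    have "v \<in> VH" "b \<in> VH" using vu b inV by auto
    then have "b \<in> {v,u}" using reach cg unfolding connected_graph_def by blast
    then show False using nv nu b by auto
  qed
qed

lemma main_HG:
  assumes cg: "connected_graph VH E" and he: "has_edge E"
  shows "is_cycle_graph KV KE \<or> is_path_graph KV KE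
       \<or> (\<exists>cs K. length cs \<ge> 6 \<and> induced_necklace KV KE cs K \<and> good_neighbours KV KE cs)"
proof (cases "\<exists>b p q. E b p \<and> E b q \<and> p \<noteq> q")
  case False
  obtain x y where "E x y" using he unfolding has_edge_def by blast
  then show ?thesis using K2case[OF cg _ False] by blast
next
  case True
  then obtain b p q where b: "E b p" "E b q" "p \<noteq> q" by blast
  have nk: noK2 using noK2_from[OF cg b] .
  show ?thesis
  proof (cases notA)
    case False
    then obtain b' a c d where h: "E b' a" "E b' c" "E b' d" "a \<noteq> c" "a \<noteq> d" "c \<noteq> d"
      and alt: "(\<exists>e. E b' e \<and> \<not> (e = a \<or> e = c \<or> e = d)) \<or> (\<exists>x. E a x \<and> x \<noteq> b')"
      unfolding notA_def by blast
    from alt have "\<exists>cs K. length cs \<ge> 6 \<and> induced_necklace KV KE cs K \<and> good_neighbours KV KE cs"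
    proof
      assume "\<exists>e. E b' e \<and> \<not> (e = a \<or> e = c \<or> e = d)"
      then obtain e where "E b' e" "e \<noteq> a" "e \<noteq> c" "e \<noteq> d" by blast
      then show ?thesis using neck1[OF nk h(1-3)] h(4-6) by blast
    next
      assume "\<exists>x. E a x \<and> x \<noteq> b'"
      then obtain x where "E a x" "x \<noteq> b'" by blast
      then show ?thesis using neck2[OF nk h(1-3)] h(4-6) by blast
    qed
    then show ?thesis by blast
  next
    case True
    have ne: "KV \<noteq> {}" using b KBV_iff[OF nk, of "tri b p q"] unfolding valid_def by blast
    have "is_cycle_graph KV KE \<or> is_path_graph KV KE"
    proof (rule path_or_cycle[OF KV_fin])
      show "\<And>x y. KE x y \<Longrightarrow> KE y x" by (rule KE_sym)
      show "\<And>x. \<not> KE x x" by (rule KE_irr)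
      show "\<And>x y. KE x y \<Longrightarrow> x \<in> KV" by (rule KE_in)
      show "KV \<noteq> {}" by (rule ne)
      show "\<And>u v. u \<in> KV \<Longrightarrow> v \<in> KV \<Longrightarrow> KE\<^sup>*\<^sup>* u v" using KE_conn[OF nk cg b] by blast
      show "\<And>x a b c. KE x a \<Longrightarrow> KE x b \<Longrightarrow> KE x c \<Longrightarrow> a = b \<or> a = c \<or> b = c"
        using KE_deg[OF nk True] by blast
    qed
    then show ?thesis by blast
  qed
qed

end

theorem mainTheorem17:
  fixes VH :: "'a set" and EH :: "'a \<Rightarrow> 'a \<Rightarrow> bool"
  assumes "graph VH EH" and "connected_graph VH EH" and "has_edge EH"
  defines "VG \<equiv> burgeon_V VH EH" and "EG \<equiv> burgeon_E EH"
  shows "is_cycle_graph (KBe_V VG EG) (KBe_E VG EG)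
       \<or> is_path_graph (KBe_V VG EG) (KBe_E VG EG)
       \<or> (\<exists>cs K. length cs \<ge> 6 \<and> induced_necklace (KBe_V VG EG) (KBe_E VG EG) cs K
              \<and> good_neighbours (KBe_V VG EG) (KBe_E VG EG) cs)"
  unfolding VG_def EG_def using HG.main_HG[OF HG.intro[OF assms(1)] assms(2,3)] .


end
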